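(* Consider the four-oscillator system below with $A=-1$ (so $K_\mathrm{s}=0$, $K_\mathrm{n}=1$) and $\alpha_\mathrm{s}=\alpha_\mathrm{n}=0$. Then the function $$H^{(-1,0)}(\psi_1,\psi_3)=\cot\!\left(\frac{\psi_1+\psi_3}{4}\right)\tan\!\left(\frac{\psi_1-\psi_3}{4}\right)$$ (with $\psi_1,\psi_3$ the real-valued phase differences of a solution) is constant along every solution on any time interval on which it is defined (i.e. on which $(\psi_1+\psi_3)/4\notin\pi\mathbb{Z}$ and $(\psi_1-\psi_3)/4\notin \pi/2+\pi\mathbb{Z}$).
   Context: Network of $M=2$ populations of $N=2$ phase oscillators with phases $\theta_{\sigma,k}(t)\in\mathbb{R}$ (population $\sigma\in\{1,2\}$, oscillator $k\in\{1,2\}$), evolving by $$\dot\theta_{\sigma,k}=\omega+\frac{K_\mathrm{s}}{4}\sum_{j=1}^{2}\sin(\theta_{\sigma,j}-\theta_{\sigma,k}-\alpha_\mathrm{s})+\frac{K_\mathrm{n}}{4}\sum_{j=1}^{2}\sin(\theta_{\tau,j}-\theta_{\sigma,k}-\alpha_\mathrm{n}),$$ where $\tau$ denotes the population other than $\sigma$, $\omega\in\mathbb{R}$, $\alpha_\mathrm{s},\alpha_\mathrm{n}\in\mathbb{R}$ are phase lags, and the coupling strengths are parametrized by $A\in\mathbb{R}$ via $K_\mathrm{s}=(1+A)/2$, $K_\mathrm{n}=(1-A)/2$ (so $K_\mathrm{s}+K_\mathrm{n}=1$, $A=K_\mathrm{s}-K_\mathrm{n}$). The phase differences are $\psi_1=\theta_{1,1}-\theta_{1,2}$,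 $\psi_2=\theta_{1,2}-\theta_{2,1}$, $\psi_3=\theta_{2,1}-\theta_{2,2}$; they satisfy an autonomous ODE (the reduced system) since the right-hand side depends only on phase differences. *)

theory Defs
  imports "HOL-Analysis.Analysis"
begin

(* Phases: theta sigma k t = theta_{sigma,k}(t), sigma, k in {1,2}. *)

definition other_pop :: "nat \<Rightarrow> nat" where
  "other_pop \<sigma> = (if \<sigma> = 1 then 2 else 1)"

definition Ks :: "real \<Rightarrow> real" where "Ks A = (1 + A) / 2"
definition Kn :: "real \<Rightarrow> real" where "Kn A = (1 - A) / 2"

definition osc_rhs ::
  "real \<Rightarrow> real \<Rightarrow> real \<Rightarrow> real \<Rightarrow> (nat \<Rightarrow> nat \<Rightarrow> real \<Rightarrow> real) \<Rightarrow> nat \<Rightarrow> nat \<Rightarrow> real \<Rightarrow> real" where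
  "osc_rhs \<omega> A \<alpha>s \<alpha>n \<theta> \<sigma> k t =
     \<omega> + Ks A / 4 * (\<Sum>j\<in>{1,2::nat}. sin (\<theta> \<sigma> j t - \<theta> \<sigma> k t - \<alpha>s))
       + Kn A / 4 * (\<Sum>j\<in>{1,2::nat}. sin (\<theta> (other_pop \<sigma>) j t - \<theta> \<sigma> k t - \<alpha>n))"

definition is_solution ::
  "real \<Rightarrow> real \<Rightarrow> real \<Rightarrow> real \<Rightarrow> (nat \<Rightarrow> nat \<Rightarrow> real \<Rightarrow> real) \<Rightarrow> real set \<Rightarrow> bool" where
  "is_solution \<omega> A \<alpha>s \<alpha>n \<theta> I \<longleftrightarrow>
     (\<forall>t\<in>I. \<forall>\<sigma>\<in>{1,2}. \<forall>k\<in>{1,2}.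
        ((\<lambda>s. \<theta> \<sigma> k s) has_real_derivative osc_rhs \<omega> A \<alpha>s \<alpha>n \<theta> \<sigma> k t) (at t))"

definition psi1 :: "(nat \<Rightarrow> nat \<Rightarrow> real \<Rightarrow> real) \<Rightarrow> real \<Rightarrow> real" where
  "psi1 \<theta> t = \<theta> 1 1 t - \<theta> 1 2 t"
definition psi3 :: "(nat \<Rightarrow> nat \<Rightarrow> real \<Rightarrow> real) \<Rightarrow> real \<Rightarrow> real" where
  "psi3 \<theta> t = \<theta> 2 1 t - \<theta> 2 2 t"

definition H_m1_0 :: "real \<Rightarrow> real \<Rightarrow> real" where
  "H_m1_0 p1 p3 = cot ((p1 + p3) / 4) * tan ((p1 - p3) / 4)"

definition H_defined :: "real \<Rightarrow> real \<Rightarrow> bool" where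
  "H_defined p1 p3 \<longleftrightarrow>
     (\<forall>m::int. (p1 + p3) / 4 \<noteq> of_int m * pi) \<and>
     (\<forall>m::int. (p1 - p3) / 4 \<noteq> pi / 2 + of_int m * pi)"

end

theory Submission
  imports Defs
begin

lemma trig_core:
  fixes al be g :: real
  shows "sin (al+be) * ((sin (be-al-g) + sin (-be-al-g) - sin (be+al-g) - sin (-be+al-g))
          - (sin (al-be+g) + sin (-al-be+g) - sin (al+be+g) - sin (-al+be+g)))
       = sin (al-be) * ((sin (be-al-g) + sin (-be-al-g) - sin (be+al-g) - sin (-be+al-g))
          + (sin (al-be+g) + sin (-al-be+g) - sin (al+be+g) - sin (-al+be+g)))"
  by (simp add: sin_add sin_diff cos_add cos_diff algebra_simps)

lemma trig4:
  fixes a b c d :: real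
  shows "sin ((a-b+c-d)/2) * ((sin (c-a)+sin (d-a)-sin (c-b)-sin (d-b)) - (sin (a-c)+sin (b-c)-sin (a-d)-sin (b-d)))
       = sin ((a-b-c+d)/2) * ((sin (c-a)+sin (d-a)-sin (c-b)-sin (d-b)) + (sin (a-c)+sin (b-c)-sin (a-d)-sin (b-d)))"
proof -
  define al where "al = (a-b)/2"
  define be where "be = (c-d)/2"
  define g where "g = (a+b-c-d)/2"
  have e: "(a-b+c-d)/2 = al+be" "(a-b-c+d)/2 = al-be" "c-a = be-al-g" "d-a = -be-al-g"
    "c-b = be+al-g" "d-b = -be+al-g" "a-c = al-be+g" "b-c = -al-be+g" "a-d = al+be+g" "b-d = -al+be+g"
    by (simp_all add: al_def be_def g_def field_simps)
  show ?thesis unfolding e by (rule trig_core)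
qed

lemma H_deriv:
  fixes u v :: "real \<Rightarrow> real"
  assumes du: "(u has_real_derivative u') (at t)" and dv: "(v has_real_derivative v') (at t)"
    and su: "sin (u t) \<noteq> 0" and cv: "cos (v t) \<noteq> 0"
    and key: "sin (2 * u t) * v' = sin (2 * v t) * u'"
  shows "((\<lambda>s. cos (u s) * sin (v s) / (sin (u s) * cos (v s))) has_real_derivative 0) (at t)"
proof -
  have k2: "2 * sin (u t) * cos (u t) * v' = 2 * sin (v t) * cos (v t) * u'"
    using key by (simp add: sin_double)
  have N: "(- (sin (u t) * u') * sin (v t) + cos (u t) * (cos (v t) * v')) * (sin (u t) * cos (v t))
     - cos (u t) * sin (v t) * (cos (u t) * u' * cos (v t) + sin (u t) * (- (sin (v t) * v'))) = 0"
  proof -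
    have "(- (sin (u t) * u') * sin (v t) + cos (u t) * (cos (v t) * v')) * (sin (u t) * cos (v t))
     - cos (u t) * sin (v t) * (cos (u t) * u' * cos (v t) + sin (u t) * (- (sin (v t) * v')))
     = sin (u t) * cos (u t) * v' * (sin (v t)^2 + cos (v t)^2) - sin (v t) * cos (v t) * u' * (sin (u t)^2 + cos(u t)^2)"
      by algebra
    also have "\<dots> = 0" using k2 by simp
    finally show ?thesis .
  qed
  have X: "(- sin (u t) * u' * sin (v t) + cos (v t) * v' * cos (u t)) *
      (sin (u t) * cos (v t)) -
      cos (u t) * sin (v t) *
      (cos (u t) * u' * cos (v t) + - sin (v t) * v' * sin (u t)) = 0"
      using N by algebra
  show ?thesis
    apply (rule derivative_eq_intros du dv refl)+
    using su cv apply simp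
    using X by (metis divide_eq_0_iff)
qed

theorem mainTheorem3:
  fixes \<theta> :: "nat \<Rightarrow> nat \<Rightarrow> real \<Rightarrow> real" and \<omega> :: real and I J :: "real set"
  assumes "open I"
    and "is_solution \<omega> (-1) 0 0 \<theta> I"
    and "J \<subseteq> I" and "is_interval J"
    and "\<forall>t\<in>J. H_defined (psi1 \<theta> t) (psi3 \<theta> t)"
  shows "\<exists>c. \<forall>t\<in>J. H_m1_0 (psi1 \<theta> t) (psi3 \<theta> t) = c"
proof -
  define u where "u = (\<lambda>s. (psi1 \<theta> s + psi3 \<theta> s) / 4)"
  define v where "v = (\<lambda>s. (psi1 \<theta> s - psi3 \<theta> s) / 4)"
  define f where "f = (\<lambda>s. cos (u s) * sin (v s) / (sin (u s) * cos (v s)))"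
  have Hf: "H_m1_0 (psi1 \<theta> t) (psi3 \<theta> t) = f t" for t
    by (simp add: H_m1_0_def f_def u_def v_def cot_def tan_def)
  have D: "(f has_real_derivative 0) (at t within J)" if tJ: "t \<in> J" for t
  proof -
    have tI: "t \<in> I" using tJ assms(3) by auto
    have sol: "\<And>\<sigma> k. \<sigma> \<in> {1,2} \<Longrightarrow> k \<in> {1,2} \<Longrightarrow>
        ((\<lambda>s. \<theta> \<sigma> k s) has_real_derivative osc_rhs \<omega> (-1) 0 0 \<theta> \<sigma> k t) (at t)"
      using assms(2) tI unfolding is_solution_def by blast
    define a' where "a' = osc_rhs \<omega> (-1) 0 0 \<theta> 1 1 t"
    define b' where "b' = osc_rhs \<omega> (-1) 0 0 \<theta> 1 2 t"
    define c' where "c' = osc_rhs \<omega> (-1) 0 0 \<theta> 2 1 t"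
    define d' where "d' = osc_rhs \<omega> (-1) 0 0 \<theta> 2 2 t"
    have da: "((\<lambda>s. \<theta> 1 1 s) has_real_derivative a') (at t)" unfolding a'_def by (rule sol) auto
    have db: "((\<lambda>s. \<theta> 1 2 s) has_real_derivative b') (at t)" unfolding b'_def by (rule sol) auto
    have dc: "((\<lambda>s. \<theta> 2 1 s) has_real_derivative c') (at t)" unfolding c'_def by (rule sol) auto
    have dd: "((\<lambda>s. \<theta> 2 2 s) has_real_derivative d') (at t)" unfolding d'_def by (rule sol) auto
    have du: "(u has_real_derivative (a' - b' + c' - d') / 4) (at t)"
      unfolding u_def psi1_def psi3_def
      apply (rule derivative_eq_intros da db dc dd refl)+
      apply (simp_all add: field_simps)
      done
    have dv: "(v has_real_derivative (a' - b' - c' + d') / 4) (at t)"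
      unfolding v_def psi1_def psi3_def
      apply (rule derivative_eq_intros da db dc dd refl)+
      apply (simp_all add: field_simps)
      done
    define a where "a = \<theta> 1 1 t"
    define b where "b = \<theta> 1 2 t"
    define c where "c = \<theta> 2 1 t"
    define d where "d = \<theta> 2 2 t"
    have ea: "a' = \<omega> + (sin (c-a) + sin (d-a)) / 4"
      by (simp add: a'_def a_def c_def d_def osc_rhs_def Ks_def Kn_def other_pop_def)
    have eb: "b' = \<omega> + (sin (c-b) + sin (d-b)) / 4"
      by (simp add: b'_def b_def c_def d_def osc_rhs_def Ks_def Kn_def other_pop_def)
    have ec: "c' = \<omega> + (sin (a-c) + sin (b-c)) / 4"
      by (simp add: c'_def a_def b_def c_def osc_rhs_def Ks_def Kn_def other_pop_def)
    have ed: "d' = \<omega> + (sin (a-d) + sin (b-d)) / 4"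
      by (simp add: d'_def a_def b_def d_def osc_rhs_def Ks_def Kn_def other_pop_def)
    have u2: "2 * u t = (a-b+c-d)/2" by (simp add: u_def psi1_def psi3_def a_def b_def c_def d_def)
    have v2: "2 * v t = (a-b-c+d)/2" by (simp add: v_def psi1_def psi3_def a_def b_def c_def d_def)
    have key: "sin (2 * u t) * ((a' - b' - c' + d') / 4) = sin (2 * v t) * ((a' - b' + c' - d') / 4)"
    proof -
      have e1: "(a' - b' - c' + d') / 4 = ((sin (c-a)+sin (d-a)-sin (c-b)-sin (d-b)) - (sin (a-c)+sin (b-c)-sin (a-d)-sin (b-d))) / 16"
        unfolding ea eb ec ed by (simp add: field_simps)
      have e2: "(a' - b' + c' - d') / 4 = ((sin (c-a)+sin (d-a)-sin (c-b)-sin (d-b)) + (sin (a-c)+sin (b-c)-sin (a-d)-sin (b-d))) / 16"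
        unfolding ea eb ec ed by (simp add: field_simps)
      show ?thesis unfolding u2 v2 e1 e2 using trig4[of a b c d] by (metis times_divide_eq_right)
    qed
    have hd: "H_defined (psi1 \<theta> t) (psi3 \<theta> t)" using assms(5) tJ by blast
    have su: "sin (u t) \<noteq> 0"
      using hd unfolding H_defined_def sin_zero_iff_int2 u_def by auto
    have cv: "cos (v t) \<noteq> 0"
      using hd unfolding H_defined_def cos_zero_iff_int2 v_def by (auto simp: add.commute)
    have "(f has_real_derivative 0) (at t)"
      unfolding f_def by (rule H_deriv[OF du dv su cv key])
    then show ?thesis by (rule has_field_derivative_at_within)
  qed
  have "convex J" using assms(4) by (rule is_interval_convex)
  then obtain c where "\<forall>x\<in>J. f x = c" using has_field_derivative_zero_constant[of J f] D by blast
  then show ?thesis using Hf by metis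
qed

end
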